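(* Let $M\ni h$ be a positive definite lattice with a distinguished vector $h$, $h^2=3$, such that $h$ is characteristic in $M$ and $M$ contains an $h$-plane. Let $S=S(M)$ be the index-$3$ overlattice of $h^\perp\oplus\mathbb Z\hbar$ (with $h^\perp\subset M$ the orthogonal complement of $h$ and $\hbar^2=12$) obtained by adjoining $\tfrac13(3l-h+\hbar)$, where $l$ is any $h$-plane of $M$ (the result does not depend on the choice of $l$). Then: (1) $S$ is even and positive definite; (2) $\hbar\in 4S^\vee$; (3) the orthogonal complement of $\hbar$ in $S$ coincides with $h^\perp\subset M$; in particular their sets of roots (vectors of square $2$) coincide; (4) the map $x\mapsto\tfrac13(3x-h+\hbar)$ is a bijection between the $h$-planes of $M$ and the planes of $S$; (5) the same map is a bijection between the vectors $e\in M$ with $e^2=e\cdot h=1$ and the vectors $e\in S$ with $e^2=2$, $e\cdot\hbar=4$.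
   Context: A lattice is a free abelian group of finite rank with a symmetric bilinear form $x\cdot y$ valued in $\mathbb Z$; $L^\vee=\{x\in L\otimes\mathbb Q: x\cdot y\in\mathbb Z\ \forall y\in L\}$. A vector $v\in M$ is characteristic if $x^2\equiv x\cdot v\pmod 2$ for all $x\in M$. An $h$-plane in $M$ is a vector $l$ with $l^2=3$, $l\cdot h=1$. A plane in $S$ is a vector $l\in S$ with $l^2=l\cdot\hbar=4$. A lattice is even if $x^2\in2\mathbb Z$ for all $x$. *)

theory Defs
  imports "HOL-Analysis.Analysis"
begin

text \<open>Lattices are modelled as full-rank-in-their-span free abelian subgroups of a
Euclidean space (the bilinear form is the inner product, so positive definiteness
of the form on L tensor R is built in).\<close>

definition int_span :: "'v::real_vector set \<Rightarrow> 'v set" where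
  "int_span B = {(\<Sum>b\<in>B. of_int (c b) *\<^sub>R b) | c. True}"

definition is_lattice :: "'v::euclidean_space set \<Rightarrow> bool" where
  "is_lattice L \<longleftrightarrow> (\<exists>B. finite B \<and> independent B \<and> L = int_span B) \<and>
     (\<forall>x\<in>L. \<forall>y\<in>L. x \<bullet> y \<in> \<int>)"

text \<open>L tensor Q, realised inside the ambient real space.\<close>
definition qspan :: "'v::real_vector set \<Rightarrow> 'v set" where
  "qspan L = {x. \<exists>n::nat. n > 0 \<and> real n *\<^sub>R x \<in> L}"

definition dual :: "'v::real_inner set \<Rightarrow> 'v set" where
  "dual L = {x \<in> qspan L. \<forall>y\<in>L. x \<bullet> y \<in> \<int>}"

definition characteristic :: "'v::real_inner set \<Rightarrow> 'v \<Rightarrow> bool" where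
  "characteristic L v \<longleftrightarrow> v \<in> L \<and> (\<forall>x\<in>L. \<exists>k::int. x \<bullet> x - x \<bullet> v = 2 * k)"

definition is_even :: "'v::real_inner set \<Rightarrow> bool" where
  "is_even L \<longleftrightarrow> (\<forall>x\<in>L. \<exists>k::int. x \<bullet> x = 2 * k)"

definition pos_def :: "'v::real_inner set \<Rightarrow> bool" where
  "pos_def L \<longleftrightarrow> (\<forall>x\<in>L. x \<noteq> 0 \<longrightarrow> x \<bullet> x > 0)"

definition h_plane :: "'v::real_inner set \<Rightarrow> 'v \<Rightarrow> 'v \<Rightarrow> bool" where
  "h_plane M h l \<longleftrightarrow> l \<in> M \<and> l \<bullet> l = 3 \<and> l \<bullet> h = 1"

definition hperp :: "'v::real_inner set \<Rightarrow> 'v \<Rightarrow> 'v set" where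
  "hperp M h = {x \<in> M. x \<bullet> h = 0}"

text \<open>The ambient space of S is (M tensor R) + R hbar, with hbar orthogonal to M
and hbar^2 = 12.\<close>
definition hbar :: "'v::real_inner \<times> real" where
  "hbar = (0, sqrt 12)"

definition plane_map :: "'v::real_inner \<Rightarrow> 'v \<Rightarrow> 'v \<times> real" where
  "plane_map h x = (1/3) *\<^sub>R ((3 *\<^sub>R x - h, 0) + hbar)"

definition S_of :: "'v::real_inner set \<Rightarrow> 'v \<Rightarrow> 'v \<Rightarrow> ('v \<times> real) set" where
  "S_of M h l = {(x, 0) + of_int m *\<^sub>R hbar + of_int j *\<^sub>R plane_map h l
                  | x m j. x \<in> hperp M h}"

end

theory Submission
  imports Defs
begin

definition phi :: "'v::real_inner \<Rightarrow> 'v \<Rightarrow> 'v \<times> real" where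
  "phi h y = (y - ((y \<bullet> h)/3) *\<^sub>R h, (y \<bullet> h) * sqrt 12 / 3)"

lemma sq12: "sqrt 12 * sqrt 12 = (12::real)" by simp

lemma phi_inner: "h \<bullet> h = 3 \<Longrightarrow> phi h y \<bullet> phi h z = y \<bullet> z + (y \<bullet> h) * (z \<bullet> h)"
  by (simp add: phi_def inner_diff_left inner_diff_right inner_commute algebra_simps sq12)

lemma phi_linear: "linear (phi h)"
  by (rule linearI) (simp_all add: phi_def algebra_simps inner_add_left add_divide_distrib flip: scaleR_add_left)

lemma phi_hbar: "h \<bullet> h = 3 \<Longrightarrow> phi h h = hbar"
  by (simp add: phi_def hbar_def)

lemma phi_inner_hbar: "phi h y \<bullet> hbar = 4 * (y \<bullet> h)"
  by (simp add: phi_def hbar_def sq12 algebra_simps)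

lemma plane_map_phi: "x \<bullet> h = 1 \<Longrightarrow> plane_map h x = phi h x"
  by (simp add: phi_def plane_map_def hbar_def algebra_simps)

lemma phi_perp: "x \<bullet> h = 0 \<Longrightarrow> phi h x = (x, 0)"
  by (simp add: phi_def)

lemma phi_inj: "inj (phi h)"
proof
  fix y z assume "phi h y = phi h z"
  then have 1: "y \<bullet> h = z \<bullet> h" and 2: "y - ((y \<bullet> h)/3) *\<^sub>R h = z - ((z \<bullet> h)/3) *\<^sub>R h"
    by (auto simp: phi_def)
  from 2 show "y = z" by (simp add: 1)
qed

lemma plane_map_inj: "inj (plane_map h)"
proof
  fix y z assume "plane_map h y = plane_map h z"
  then show "y = z" by (auto simp: plane_map_def hbar_def)
qed

lemma int_span_lin:
  assumes "x \<in> int_span B" "y \<in> int_span B"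
  shows "of_int a *\<^sub>R x + of_int b *\<^sub>R y \<in> int_span B"
proof -
  from assms obtain c d where x: "x = (\<Sum>v\<in>B. of_int (c v) *\<^sub>R v)" and y: "y = (\<Sum>v\<in>B. of_int (d v) *\<^sub>R v)"
    by (auto simp: int_span_def)
  have "of_int a *\<^sub>R x + of_int b *\<^sub>R y = (\<Sum>v\<in>B. of_int (a * c v + b * d v) *\<^sub>R v)"
    by (simp add: x y scaleR_sum_right sum.distrib scaleR_add_left)
  then show ?thesis unfolding int_span_def by (auto intro!: exI[of _ "\<lambda>v. a * c v + b * d v"])
qed

lemma int_span_image:
  assumes "linear f" "inj f"
  shows "int_span (f ` B) = f ` int_span B"
proof
  show "int_span (f ` B) \<subseteq> f ` int_span B"
  proof
    fix x assume "x \<in> int_span (f ` B)"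
    then obtain c where x: "x = (\<Sum>v\<in>f ` B. of_int (c v) *\<^sub>R v)" by (auto simp: int_span_def)
    have "x = (\<Sum>v\<in>B. of_int (c (f v)) *\<^sub>R f v)"
      using x by (simp add: sum.reindex inj_on_subset[OF assms(2)])
    also have "\<dots> = f (\<Sum>v\<in>B. of_int (c (f v)) *\<^sub>R v)"
      by (simp add: linear_sum[OF assms(1)] linear_scale[OF assms(1)] o_def)
    finally show "x \<in> f ` int_span B" unfolding int_span_def
      by (auto intro!: image_eqI exI[of _ "\<lambda>v. c (f v)"])
  qed
next
  show "f ` int_span B \<subseteq> int_span (f ` B)"
  proof
    fix x assume "x \<in> f ` int_span B"
    then obtain c where x: "x = f (\<Sum>v\<in>B. of_int (c v) *\<^sub>R v)" by (auto simp: int_span_def)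
    have "x = (\<Sum>v\<in>B. of_int (c v) *\<^sub>R f v)"
      by (simp add: x linear_sum[OF assms(1)] linear_scale[OF assms(1)] o_def)
    also have "\<dots> = (\<Sum>v\<in>B. of_int ((c \<circ> inv f) (f v)) *\<^sub>R f v)"
      using assms(2) by simp
    also have "\<dots> = (\<Sum>v\<in>f ` B. of_int ((c \<circ> inv f) v) *\<^sub>R v)"
      by (simp add: sum.reindex inj_on_subset[OF assms(2)] o_def)
    finally show "x \<in> int_span (f ` B)" unfolding int_span_def
      by (auto intro!: exI[of _ "c \<circ> inv f"])
  qed
qed


lemma lat_lin:
  assumes "is_lattice M" "x \<in> M" "y \<in> M"
  shows "of_int a *\<^sub>R x + of_int b *\<^sub>R y \<in> M"
  using assms int_span_lin unfolding is_lattice_def by blast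

lemma lat_int:
  assumes "is_lattice M" "x \<in> M" "y \<in> M"
  shows "x \<bullet> y \<in> \<int>"
  using assms unfolding is_lattice_def by blast

lemma S_eq:
  assumes L: "is_lattice M" and hM: "h \<in> M" and hh: "h \<bullet> h = 3" and pl: "h_plane M h l"
  shows "S_of M h l = phi h ` M"
proof
  have lM: "l \<in> M" and lh: "l \<bullet> h = 1" using pl by (auto simp: h_plane_def)
  show "S_of M h l \<subseteq> phi h ` M"
  proof
    fix s assume "s \<in> S_of M h l"
    then obtain x m j where s: "s = (x, 0) + of_int m *\<^sub>R hbar + of_int j *\<^sub>R plane_map h l"
      and x: "x \<in> hperp M h" unfolding S_of_def by blast
    have xM: "x \<in> M" and xh: "x \<bullet> h = 0" using x by (auto simp: hperp_def)
    have "of_int 1 *\<^sub>R x + of_int 1 *\<^sub>R (of_int m *\<^sub>R h + of_int j *\<^sub>R l) \<in> M"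
      by (intro lat_lin[OF L] xM lat_lin[OF L hM lM])
    then have yM: "x + (of_int m *\<^sub>R h + of_int j *\<^sub>R l) \<in> M" by simp
    have "s = phi h (x + (of_int m *\<^sub>R h + of_int j *\<^sub>R l))"
      by (simp add: s linear_add[OF phi_linear] linear_scale[OF phi_linear] phi_perp[OF xh]
          phi_hbar[OF hh] plane_map_phi[OF lh])
    then show "s \<in> phi h ` M" using yM by blast
  qed
  show "phi h ` M \<subseteq> S_of M h l"
  proof
    fix s assume "s \<in> phi h ` M"
    then obtain y where s: "s = phi h y" and yM: "y \<in> M" by blast
    obtain a where a: "y \<bullet> h = of_int a" using lat_int[OF L yM hM] Ints_cases by metis
    have "of_int 1 *\<^sub>R y + of_int (-a) *\<^sub>R l \<in> M" by (intro lat_lin[OF L yM lM])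
    then have xM: "y - of_int a *\<^sub>R l \<in> M" by simp
    have xh: "(y - of_int a *\<^sub>R l) \<bullet> h = 0" by (simp add: inner_diff_left a lh)
    have "s = phi h (y - of_int a *\<^sub>R l) + of_int a *\<^sub>R phi h l"
      by (simp add: s linear_diff[OF phi_linear] linear_scale[OF phi_linear])
    also have "\<dots> = (y - of_int a *\<^sub>R l, 0) + of_int 0 *\<^sub>R hbar + of_int a *\<^sub>R plane_map h l"
      by (simp add: phi_perp[OF xh] plane_map_phi[OF lh])
    finally have sx: "s = (y - of_int a *\<^sub>R l, 0) + of_int 0 *\<^sub>R hbar + of_int a *\<^sub>R plane_map h l" .
    have hp: "y - of_int a *\<^sub>R l \<in> hperp M h" using xM xh by (simp add: hperp_def)
    show "s \<in> S_of M h l" unfolding S_of_def using sx hp by blast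
  qed
qed


theorem proposition3p1:
  fixes M :: "'v::euclidean_space set" and h l :: 'v
  assumes "is_lattice M" and "h \<in> M" and "h \<bullet> h = 3"
    and "characteristic M h" and "h_plane M h l"
  shows "(\<forall>l'. h_plane M h l' \<longrightarrow> S_of M h l' = S_of M h l)
    \<and> is_lattice (S_of M h l) \<and> is_even (S_of M h l) \<and> pos_def (S_of M h l)
    \<and> (\<exists>y\<in>dual (S_of M h l). hbar = 4 *\<^sub>R y)
    \<and> {x \<in> S_of M h l. x \<bullet> hbar = 0} = (\<lambda>x. (x, 0)) ` hperp M h
    \<and> {x \<in> S_of M h l. x \<bullet> hbar = 0 \<and> x \<bullet> x = 2} = (\<lambda>x. (x, 0)) ` {x \<in> hperp M h. x \<bullet> x = 2}
    \<and> bij_betw (plane_map h) {x. h_plane M h x} {p \<in> S_of M h l. p \<bullet> p = 4 \<and> p \<bullet> hbar = 4}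
    \<and> bij_betw (plane_map h) {e \<in> M. e \<bullet> e = 1 \<and> e \<bullet> h = 1}
                              {e \<in> S_of M h l. e \<bullet> e = 2 \<and> e \<bullet> hbar = 4}"
proof -
  note L = assms(1) and hM = assms(2) and hh = assms(3) and ch = assms(4) and pl = assms(5)
  have SE: "S_of M h l = phi h ` M" by (rule S_eq[OF L hM hh pl])
  have P1: "\<forall>l'. h_plane M h l' \<longrightarrow> S_of M h l' = S_of M h l"
    using S_eq[OF L hM hh] SE by auto
  have P2: "is_lattice (S_of M h l)"
  proof -
    obtain B where B: "finite B" "independent B" "M = int_span B"
      using L unfolding is_lattice_def by blast
    have "independent (phi h ` B)"
      by (rule linear_independent_injective_image[OF phi_linear B(2)])
         (meson inj_on_subset phi_inj subset_UNIV)
    moreover have "S_of M h l = int_span (phi h ` B)"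
      using SE B(3) int_span_image[OF phi_linear phi_inj, of h B] by simp
    moreover have "\<forall>x\<in>S_of M h l. \<forall>y\<in>S_of M h l. x \<bullet> y \<in> \<int>"
      using lat_int[OF L] SE hM by (auto simp: phi_inner[OF hh] intro!: Ints_add Ints_mult)
    ultimately show ?thesis unfolding is_lattice_def using B(1) by blast
  qed
  have P3: "is_even (S_of M h l)"
    unfolding is_even_def SE
  proof
    fix s assume "s \<in> phi h ` M"
    then obtain y where s: "s = phi h y" and yM: "y \<in> M" by blast
    obtain a where a: "y \<bullet> h = of_int a" using lat_int[OF L yM hM] Ints_cases by metis
    obtain k where k: "y \<bullet> y - y \<bullet> h = 2 * of_int k" using ch yM unfolding characteristic_def by blast
    have "even (a * (a + 1))" by simp
    then obtain k' where k': "a * (a + 1) = 2 * k'" by blast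
    have "s \<bullet> s = y \<bullet> y + of_int a * of_int a" by (simp add: s phi_inner[OF hh] a)
    also have "\<dots> = 2 * of_int k + of_int (a * (a + 1))" using k a by (simp add: algebra_simps)
    also have "\<dots> = 2 * of_int (k + k')" by (simp only: k' of_int_add of_int_mult) simp
    finally show "\<exists>k::int. s \<bullet> s = 2 * k" by blast
  qed
  have P4: "pos_def (S_of M h l)" unfolding pos_def_def by simp
  have P5: "\<exists>y\<in>dual (S_of M h l). hbar = 4 *\<^sub>R y"
  proof (intro bexI)
    let ?y = "(0::'v, sqrt 12 / 4)"
    show "hbar = 4 *\<^sub>R ?y" by (simp add: hbar_def)
    have "real 4 *\<^sub>R ?y \<in> S_of M h l" using SE hM phi_hbar[OF hh] by (auto simp: hbar_def intro!: image_eqI[of _ _ h])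
    then have "?y \<in> qspan (S_of M h l)" unfolding qspan_def by (intro CollectI exI[of _ 4]) simp
    moreover have "\<forall>z\<in>S_of M h l. ?y \<bullet> z \<in> \<int>"
    proof
      fix z assume "z \<in> S_of M h l"
      then obtain y where z: "z = phi h y" and yM: "y \<in> M" using SE by blast
      have "?y \<bullet> z = y \<bullet> h" by (simp add: z phi_def sq12 algebra_simps)
      then show "?y \<bullet> z \<in> \<int>" using lat_int[OF L yM hM] by simp
    qed
    ultimately show "?y \<in> dual (S_of M h l)" unfolding dual_def by blast
  qed
  have P6: "{x \<in> S_of M h l. x \<bullet> hbar = 0} = (\<lambda>x. (x, 0)) ` hperp M h"
  proof (intro equalityI subsetI)
    fix s assume "s \<in> {x \<in> S_of M h l. x \<bullet> hbar = 0}"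
    then obtain y where s: "s = phi h y" and yM: "y \<in> M" and "phi h y \<bullet> hbar = 0" using SE by auto
    then have yh: "y \<bullet> h = 0" by (simp add: phi_inner_hbar)
    then show "s \<in> (\<lambda>x. (x, 0)) ` hperp M h" using yM by (auto simp: s phi_perp hperp_def)
  next
    fix s :: "'v \<times> real" assume "s \<in> (\<lambda>x. (x, 0)) ` hperp M h"
    then obtain y where s: "s = (y, 0::real)" and yM: "y \<in> M" and yh: "y \<bullet> h = 0" by (auto simp: hperp_def)
    have "s = phi h y" by (simp add: s phi_perp[OF yh])
    then show "s \<in> {x \<in> S_of M h l. x \<bullet> hbar = 0}" using SE yM yh by (auto simp: phi_inner_hbar)
  qed
  have P7: "{x \<in> S_of M h l. x \<bullet> hbar = 0 \<and> x \<bullet> x = 2} = (\<lambda>x. (x, 0)) ` {x \<in> hperp M h. x \<bullet> x = 2}"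
  proof -
    have "{x \<in> S_of M h l. x \<bullet> hbar = 0 \<and> x \<bullet> x = 2} = {x \<in> {x \<in> S_of M h l. x \<bullet> hbar = 0}. x \<bullet> x = 2}"
      by blast
    also have "\<dots> = {x \<in> (\<lambda>x. (x, 0::real)) ` hperp M h. x \<bullet> x = 2}" by (simp only: P6)
    also have "\<dots> = (\<lambda>x. (x, 0)) ` {x \<in> hperp M h. x \<bullet> x = 2}" by auto
    finally show ?thesis .
  qed
  have img: "plane_map h ` {e \<in> M. e \<bullet> e = c \<and> e \<bullet> h = 1} = {p \<in> S_of M h l. p \<bullet> p = c + 1 \<and> p \<bullet> hbar = 4}" for c
  proof (intro equalityI subsetI)
    fix p assume "p \<in> plane_map h ` {e \<in> M. e \<bullet> e = c \<and> e \<bullet> h = 1}"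
    then obtain e where p: "p = plane_map h e" and eM: "e \<in> M" and ee: "e \<bullet> e = c" and eh: "e \<bullet> h = 1" by blast
    have "p = phi h e" by (simp add: p plane_map_phi[OF eh])
    then show "p \<in> {p \<in> S_of M h l. p \<bullet> p = c + 1 \<and> p \<bullet> hbar = 4}"
      using SE eM by (simp add: phi_inner[OF hh] phi_inner_hbar ee eh)
  next
    fix p assume "p \<in> {p \<in> S_of M h l. p \<bullet> p = c + 1 \<and> p \<bullet> hbar = 4}"
    then obtain e where p: "p = phi h e" and eM: "e \<in> M" and pp: "phi h e \<bullet> phi h e = c + 1"
      and ph: "phi h e \<bullet> hbar = 4" using SE by auto
    have eh: "e \<bullet> h = 1" using ph by (simp add: phi_inner_hbar)
    have ee: "e \<bullet> e = c" using pp by (simp add: phi_inner[OF hh] eh)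
    show "p \<in> plane_map h ` {e \<in> M. e \<bullet> e = c \<and> e \<bullet> h = 1}"
      using eM ee eh by (auto simp: p plane_map_phi[OF eh, symmetric])
  qed
  have P8: "bij_betw (plane_map h) {x. h_plane M h x} {p \<in> S_of M h l. p \<bullet> p = 4 \<and> p \<bullet> hbar = 4}"
  proof -
    have e: "{x. h_plane M h x} = {e \<in> M. e \<bullet> e = 3 \<and> e \<bullet> h = 1}" by (auto simp: h_plane_def)
    have i: "plane_map h ` {x. h_plane M h x} = {p \<in> S_of M h l. p \<bullet> p = 4 \<and> p \<bullet> hbar = 4}"
      unfolding e img[of 3] by simp
    show ?thesis unfolding bij_betw_def using i plane_map_inj inj_on_subset by blast
  qed
  have P9: "bij_betw (plane_map h) {e \<in> M. e \<bullet> e = 1 \<and> e \<bullet> h = 1}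
                              {e \<in> S_of M h l. e \<bullet> e = 2 \<and> e \<bullet> hbar = 4}"
  proof -
    have i: "plane_map h ` {e \<in> M. e \<bullet> e = 1 \<and> e \<bullet> h = 1} = {e \<in> S_of M h l. e \<bullet> e = 2 \<and> e \<bullet> hbar = 4}"
      using img[of 1] by simp
    show ?thesis unfolding bij_betw_def using i plane_map_inj inj_on_subset by blast
  qed
  show ?thesis using P1 P2 P3 P4 P5 P6 P7 P8 P9 by blast
qed

end
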